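(* For every $n \geq 3$, letting $C_n$ denote the cycle of length $n$, ${\rm ML}^{\rm W}(C_n)=3$ if $n=3$, and ${\rm ML}^{\rm W}(C_n)=2n-6$ if $n\geq 4$.
   Context: A walk of a graph $G$ is a sequence of vertices $u_0u_1\dots u_p$ with $u_tu_{t+1}\in E(G)$ for all $t$ (vertices and edges may repeat); its length is $p$. For a walk $W$ of $G$, $G+W$ is the multigraph on $V(G)$ whose edge multiset consists of $E(G)$ together with each edge added as many times as $W$ traverses it. A multigraph is locally irregular if no two adjacent vertices have the same degree; a walk is irregularising if $G+W$ is locally irregular. ${\rm ML}^{\rm W}(G)$ denotes the minimum length of an irregularising walk of $G$ (a walk of length $0$ is allowed). *)

theory Defs
  imports Main
begin

text \<open>A simple graph is given by a vertex set V and a set E of edges,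
  each edge being a 2-element subset of V.\<close>

definition cycle_edges :: "nat \<Rightarrow> nat set set" where
  "cycle_edges n = {{i, (i + 1) mod n} | i. i < n}"

definition cycle_verts :: "nat \<Rightarrow> nat set" where
  "cycle_verts n = {0..<n}"

definition is_walk :: "'a set \<Rightarrow> 'a set set \<Rightarrow> 'a list \<Rightarrow> bool" where
  "is_walk V E w \<longleftrightarrow> w \<noteq> [] \<and> set w \<subseteq> V \<and>
     (\<forall>t. Suc t < length w \<longrightarrow> {w ! t, w ! Suc t} \<in> E)"

definition walk_length :: "'a list \<Rightarrow> nat" where
  "walk_length w = length w - 1"

definition mult_plus_walk :: "'a set set \<Rightarrow> 'a list \<Rightarrow> 'a set \<Rightarrow> nat" where
  "mult_plus_walk E w e =
     (if e \<in> E then 1 else 0) + card {t. Suc t < length w \<and> {w ! t, w ! Suc t} = e}"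

definition deg_plus_walk :: "'a set set \<Rightarrow> 'a list \<Rightarrow> 'a \<Rightarrow> nat" where
  "deg_plus_walk E w v = (\<Sum>e\<in>{e\<in>E. v \<in> e}. mult_plus_walk E w e)"

definition irregularising :: "'a set \<Rightarrow> 'a set set \<Rightarrow> 'a list \<Rightarrow> bool" where
  "irregularising V E w \<longleftrightarrow> is_walk V E w \<and>
     (\<forall>u v. {u, v} \<in> E \<longrightarrow> u \<noteq> v \<longrightarrow> deg_plus_walk E w u \<noteq> deg_plus_walk E w v)"

definition MLW :: "'a set \<Rightarrow> 'a set set \<Rightarrow> nat" where
  "MLW V E = (LEAST p. \<exists>w. irregularising V E w \<and> walk_length w = p)"

end

theory Submission
  imports Defs
begin

definition cw :: "'a list \<Rightarrow> 'a set \<Rightarrow> nat" where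
  "cw w e = card {t. Suc t < length w \<and> {w ! t, w ! Suc t} = e}"

lemma cw_sum: "cw w e = (\<Sum>t<length w - 1. if {w ! t, w ! Suc t} = e then 1 else 0)"
proof -
  have "{t. Suc t < length w \<and> {w ! t, w ! Suc t} = e} = {t\<in>{..<length w - 1}. {w ! t, w ! Suc t} = e}"
    by auto
  then show ?thesis unfolding cw_def
    by (simp add: sum.inter_filter[symmetric])
qed

definition nx :: "nat \<Rightarrow> nat \<Rightarrow> nat" where
  "nx n i = (if Suc i = n then 0 else Suc i)"

definition pv :: "nat \<Rightarrow> nat \<Rightarrow> nat" where
  "pv n i = (if i = 0 then n - 1 else i - 1)"

definition E :: "nat \<Rightarrow> nat \<Rightarrow> nat set" where
  "E n i = {i, nx n i}"

lemma suc_mod: "i < n \<Longrightarrow> Suc i mod n = nx n i"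
  unfolding nx_def
proof (cases "Suc i = n")
  case False
  assume "i < n"
  with False have "Suc i < n" by simp
  then show "Suc i mod n = (if Suc i = n then 0 else Suc i)" using False by simp
qed simp

lemma nx_lt: "i < n \<Longrightarrow> nx n i < n" unfolding nx_def by auto
lemma pv_lt: "i < n \<Longrightarrow> pv n i < n" unfolding pv_def by auto
lemma nx_pv: "i < n \<Longrightarrow> nx n (pv n i) = i" unfolding nx_def pv_def by auto
lemma pv_nx: "i < n \<Longrightarrow> pv n (nx n i) = i" unfolding nx_def pv_def by auto

lemma cycle_edges_E: "cycle_edges n = E n ` {..<n}"
  unfolding E_def cycle_edges_def using suc_mod by fastforce

lemma E_in: "i < n \<Longrightarrow> E n i \<in> cycle_edges n"
  unfolding cycle_edges_E by auto

lemma in_E: "e \<in> cycle_edges n \<Longrightarrow> \<exists>i<n. e = E n i"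
  unfolding cycle_edges_E by auto

lemma E_ne: "n \<ge> 3 \<Longrightarrow> i < n \<Longrightarrow> i \<noteq> nx n i"
  by (simp add: nx_def)

lemma E_inj: assumes "n \<ge> 3" "i < n" "j < n" "E n i = E n j" shows "i = j"
proof (rule ccontr)
  assume "i \<noteq> j"
  then have "i = nx n j \<and> nx n i = j" using assms(4) unfolding E_def doubleton_eq_iff by blast
  with assms show False
    by (simp add: nx_def split: if_splits)
qed

lemma incident: assumes "n \<ge> 3" "v < n"
  shows "{e \<in> cycle_edges n. v \<in> e} = {E n (pv n v), E n v}"
proof
  show "{e \<in> cycle_edges n. v \<in> e} \<subseteq> {E n (pv n v), E n v}"
  proof
    fix e assume "e \<in> {e \<in> cycle_edges n. v \<in> e}"
    then obtain i where i: "i < n" "e = E n i" "v \<in> E n i" using in_E by blast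
    then have "v = i \<or> v = nx n i" unfolding E_def by auto
    moreover have "v = nx n i \<Longrightarrow> i = pv n v"
      using i(1) pv_nx by auto
    ultimately show "e \<in> {E n (pv n v), E n v}" using i by auto
  qed
next
  show "{E n (pv n v), E n v} \<subseteq> {e \<in> cycle_edges n. v \<in> e}"
    using assms nx_pv[of v n] E_in[of "pv n v" n] E_in[of v n] pv_lt[of v n]
    by (auto simp: E_def)
qed

lemma incident_ne: assumes "n \<ge> 3" "v < n" shows "E n (pv n v) \<noteq> E n v"
proof
  assume "E n (pv n v) = E n v"
  then have "pv n v = v" using E_inj assms pv_lt by auto
  then show False using assms unfolding pv_def by (auto split: if_splits)
qed

lemma deg_formula: assumes "n \<ge> 3" "v < n"
  shows "deg_plus_walk (cycle_edges n) w v = 2 + cw w (E n (pv n v)) + cw w (E n v)"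
proof -
  have m: "\<And>i. i < n \<Longrightarrow> mult_plus_walk (cycle_edges n) w (E n i) = 1 + cw w (E n i)"
    unfolding mult_plus_walk_def cw_def using E_in by auto
  show ?thesis unfolding deg_plus_walk_def incident[OF assms]
    using incident_ne[OF assms] m[of v] m[of "pv n v"] assms pv_lt by simp
qed


abbreviation "CW n \<equiv> is_walk (cycle_verts n) (cycle_edges n)"

lemma step_edge: assumes "CW n w" "Suc t < length w"
  obtains i where "i < n" "{w ! t, w ! Suc t} = E n i"
  using assms in_E unfolding is_walk_def by metis

lemma step_ne: assumes "n \<ge> 3" "CW n w" "Suc t < length w"
  shows "w ! t \<noteq> w ! Suc t"
proof
  assume eq: "w ! t = w ! Suc t"
  obtain i where i: "i < n" "{w ! t, w ! Suc t} = E n i" using step_edge assms(2,3) by blast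
  have "i \<in> {w ! t, w ! Suc t}" "nx n i \<in> {w ! t, w ! Suc t}" using i(2) unfolding E_def by auto
  then have "i = nx n i" using eq by simp
  then show False using E_ne assms(1) i(1) by metis
qed

lemma irr_iff: assumes "n \<ge> 3" "CW n w"
  shows "irregularising (cycle_verts n) (cycle_edges n) w \<longleftrightarrow>
     (\<forall>j<n. cw w (E n j) \<noteq> cw w (E n (nx n (nx n j))))"
proof
  assume irr: "irregularising (cycle_verts n) (cycle_edges n) w"
  show "\<forall>j<n. cw w (E n j) \<noteq> cw w (E n (nx n (nx n j)))"
  proof (intro allI impI)
    fix j assume j: "j < n"
    define u where "u = nx n j"
    define v where "v = nx n u"
    have u: "u < n" "pv n u = j" using j nx_lt pv_nx unfolding u_def by auto
    have v: "v < n" "pv n v = u" using u nx_lt pv_nx unfolding v_def by auto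
    have "{u, v} \<in> cycle_edges n" using E_in[OF u(1)] unfolding E_def v_def .
    moreover have "u \<noteq> v" using E_ne[OF assms(1) u(1)] unfolding v_def .
    ultimately have "deg_plus_walk (cycle_edges n) w u \<noteq> deg_plus_walk (cycle_edges n) w v"
      using irr unfolding irregularising_def by blast
    then show "cw w (E n j) \<noteq> cw w (E n (nx n (nx n j)))"
      using deg_formula[OF assms(1) u(1)] deg_formula[OF assms(1) v(1)] u v
      unfolding u_def v_def by simp
  qed
next
  assume H: "\<forall>j<n. cw w (E n j) \<noteq> cw w (E n (nx n (nx n j)))"
  show "irregularising (cycle_verts n) (cycle_edges n) w"
    unfolding irregularising_def
  proof (intro conjI allI impI)
    show "CW n w" by fact
    fix u v assume uv: "{u, v} \<in> cycle_edges n" "u \<noteq> v"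
    then obtain i where i: "i < n" "{u, v} = {i, nx n i}" using in_E[OF uv(1)] unfolding E_def by blast
    have ni: "nx n i < n" "pv n (nx n i) = i" using i nx_lt pv_nx by auto
    have pi: "pv n i < n" "nx n (pv n i) = i" using i pv_lt nx_pv by auto
    have "deg_plus_walk (cycle_edges n) w i \<noteq> deg_plus_walk (cycle_edges n) w (nx n i)"
      using deg_formula[OF assms(1) i(1)] deg_formula[OF assms(1) ni(1)] ni pi H[rule_format, OF pi(1)]
      by simp
    moreover have "(u = i \<and> v = nx n i) \<or> (u = nx n i \<and> v = i)"
      using i(2) unfolding doubleton_eq_iff .
    ultimately show "deg_plus_walk (cycle_edges n) w u \<noteq> deg_plus_walk (cycle_edges n) w v"
      by auto
  qed
qed

lemma len_sum: assumes "n \<ge> 3" "CW n w"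
  shows "length w - 1 = (\<Sum>i<n. cw w (E n i))"
proof -
  have "(\<Sum>i<n. cw w (E n i)) = (\<Sum>i<n. \<Sum>t<length w - 1. if {w ! t, w ! Suc t} = E n i then 1 else 0)"
    by (simp add: cw_sum)
  also have "\<dots> = (\<Sum>t<length w - 1. \<Sum>i<n. if {w ! t, w ! Suc t} = E n i then 1 else 0)"
    by (rule sum.swap)
  also have "\<dots> = (\<Sum>t<length w - 1. (1::nat))"
  proof (rule sum.cong)
    fix t assume "t \<in> {..<length w - 1}"
    then have "Suc t < length w" by auto
    then obtain i0 where i0: "i0 < n" "{w ! t, w ! Suc t} = E n i0" using step_edge assms(2) by blast
    have "(\<Sum>i<n. if {w ! t, w ! Suc t} = E n i then 1 else (0::nat)) = (\<Sum>i<n. if i = i0 then 1 else (0::nat))"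
      using E_inj[OF assms(1) i0(1)] i0 by (intro sum.cong) auto
    also have "\<dots> = 1" using i0(1) by simp
    finally show "(\<Sum>i<n. if {w ! t, w ! Suc t} = E n i then 1 else (0::nat)) = 1" .
  qed simp
  finally show ?thesis by simp
qed

lemma inc_aux: "{e \<in> S. v \<in> e} = T \<Longrightarrow> s \<in> S \<Longrightarrow> (v \<in> s \<longleftrightarrow> s \<in> T)"
  by blast

lemma if2_aux: "A \<noteq> B \<Longrightarrow> (if s = A then 1 else 0) + (if s = B then 1 else 0) = (if s \<in> {A, B} then 1 else (0::nat))"
  by auto

lemma if3_aux: "a \<noteq> b \<Longrightarrow> (if a = v then 1 else 0) + (if b = v then 1 else 0) = (if v \<in> {a, b} then 1 else (0::nat))"
  by auto

lemma parity: assumes "n \<ge> 3" "CW n w" "v < n"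
  shows "even (cw w (E n (pv n v)) + cw w (E n v) + (if w ! 0 = v then 1 else 0)
     + (if w ! (length w - 1) = v then 1 else 0))"
proof -
  define p where "p = length w - 1"
  have lw: "length w = Suc p" using assms(2) unfolding p_def is_walk_def by auto
  define f where "f t = (if w ! t = v then 1 else (0::nat))" for t
  have "cw w (E n (pv n v)) + cw w (E n v) =
      (\<Sum>t<p. (if {w ! t, w ! Suc t} = E n (pv n v) then 1 else 0) + (if {w ! t, w ! Suc t} = E n v then 1 else 0))"
    unfolding cw_sum p_def by (simp only: sum.distrib)
  also have "\<dots> = (\<Sum>t<p. f t + f (Suc t))"
  proof (rule sum.cong)
    fix t assume "t \<in> {..<p}"
    then have t: "Suc t < length w" using lw by auto
    have ne: "w ! t \<noteq> w ! Suc t" using step_ne[OF assms(1,2) t] .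
    have inE: "{w ! t, w ! Suc t} \<in> cycle_edges n" using assms(2) t unfolding is_walk_def by blast
    have "v \<in> {w ! t, w ! Suc t} \<longleftrightarrow> {w ! t, w ! Suc t} \<in> {E n (pv n v), E n v}"
      using incident[OF assms(1,3)] inE by (rule inc_aux)
    moreover have "(if {w ! t, w ! Suc t} = E n (pv n v) then 1 else 0) + (if {w ! t, w ! Suc t} = E n v then 1 else 0)
       = (if {w ! t, w ! Suc t} \<in> {E n (pv n v), E n v} then 1 else (0::nat))"
      using incident_ne[OF assms(1,3)] by (rule if2_aux)
    moreover have "f t + f (Suc t) = (if v \<in> {w ! t, w ! Suc t} then 1 else 0)"
      using ne unfolding f_def by (rule if3_aux)
    ultimately show "(if {w ! t, w ! Suc t} = E n (pv n v) then 1 else 0) + (if {w ! t, w ! Suc t} = E n v then 1 else 0)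
         = f t + f (Suc t)" by argo
  qed simp
  also have "\<dots> = (\<Sum>t<p. f t) + (\<Sum>t<p. f (Suc t))" by (simp add: sum.distrib)
  finally have A: "cw w (E n (pv n v)) + cw w (E n v) = (\<Sum>t<p. f t) + (\<Sum>t<p. f (Suc t))" .
  have B: "(\<Sum>t<Suc p. f t) = (\<Sum>t<p. f t) + f p" by simp
  have C: "(\<Sum>t<Suc p. f t) = f 0 + (\<Sum>t<p. f (Suc t))" by (rule sum.lessThan_Suc_shift)
  have "cw w (E n (pv n v)) + cw w (E n v) + f 0 + f p = 2 * (\<Sum>t<Suc p. f t)"
    using A B C by simp
  then have "even (cw w (E n (pv n v)) + cw w (E n v) + f 0 + f p)" by (subst \<open>_ = 2 * _\<close>) simp
  then show ?thesis unfolding f_def p_def by simp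
qed


lemma pos_card: "x \<in> A \<Longrightarrow> finite A \<Longrightarrow> card A > 0"
  using card_gt_0_iff by blast

lemma cw_pos: assumes "Suc t < length w" shows "cw w {w ! t, w ! Suc t} > 0"
proof -
  define e where "e = {w ! t, w ! Suc t}"
  have "t \<in> {s. Suc s < length w \<and> {w ! s, w ! Suc s} = e}" using assms unfolding e_def by simp
  moreover have "finite {s. Suc s < length w \<and> {w ! s, w ! Suc s} = e}"
    by (rule finite_subset[of _ "{..<length w}"]) auto
  ultimately have "cw w e > 0" unfolding cw_def by (rule pos_card)
  then show ?thesis unfolding e_def .
qed

lemma cw_zero_outside: assumes "\<forall>t<length w. P (w ! t)" "v \<in> e" "\<not> P v"
  shows "cw w e = 0"
proof -
  have "{t. Suc t < length w \<and> {w ! t, w ! Suc t} = e} = {}"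
  proof (rule ccontr)
    assume "{t. Suc t < length w \<and> {w ! t, w ! Suc t} = e} \<noteq> {}"
    then obtain t where t: "Suc t < length w" "{w ! t, w ! Suc t} = e" by blast
    then have "P (w ! t)" "P (w ! Suc t)" using assms(1) by auto
    moreover have "v = w ! t \<or> v = w ! Suc t" using t(2) assms(2) by blast
    ultimately show False using assms(3) by blast
  qed
  then show ?thesis unfolding cw_def by (metis card.empty)
qed

lemma side_arith: assumes "i < n" "i \<noteq> a" "i \<noteq> b" "a < b" "b < n"
  shows "(a < i \<and> i \<le> b) \<longleftrightarrow> (a < nx n i \<and> nx n i \<le> b)"
  using assms unfolding nx_def by auto

lemma walk_side: assumes "n \<ge> 3" "CW n w" "a < b" "b < n" "cw w (E n a) = 0" "cw w (E n b) = 0"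
  shows "t < length w \<Longrightarrow> (a < w ! t \<and> w ! t \<le> b) \<longleftrightarrow> (a < w ! 0 \<and> w ! 0 \<le> b)"
proof (induction t)
  case 0
  then show ?case by simp
next
  case (Suc t)
  obtain i where i: "i < n" "{w ! t, w ! Suc t} = E n i" using step_edge[OF assms(2) Suc.prems] by blast
  have "cw w (E n i) > 0" using cw_pos[OF Suc.prems] i(2) by simp
  then have "i \<noteq> a" "i \<noteq> b" using assms(5,6) by auto
  then have si: "(a < i \<and> i \<le> b) \<longleftrightarrow> (a < nx n i \<and> nx n i \<le> b)"
    using side_arith i(1) assms(3,4) by blast
  have "(w ! t = i \<and> w ! Suc t = nx n i) \<or> (w ! t = nx n i \<and> w ! Suc t = i)"
    using i(2) unfolding E_def doubleton_eq_iff .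
  then have "(a < w ! Suc t \<and> w ! Suc t \<le> b) \<longleftrightarrow> (a < w ! t \<and> w ! t \<le> b)"
    using si by auto
  then show ?case using Suc.IH Suc.prems by simp
qed

lemma nx2: "j < n \<Longrightarrow> n \<ge> 3 \<Longrightarrow> nx n (nx n j) = (if Suc (Suc j) < n then Suc (Suc j) else Suc (Suc j) - n)"
  unfolding nx_def by auto

lemma pair_zero:
  assumes "n \<ge> 3" "CW n w" "\<forall>j<n. cw w (E n j) \<noteq> cw w (E n (nx n (nx n j)))"
    "a < b" "b < n" "cw w (E n a) = 0" "cw w (E n b) = 0"
    "d < n" "cw w (E n d) = 0" "d < a \<or> b < d"
  shows "b = Suc a"
proof (cases "a < w ! 0 \<and> w ! 0 \<le> b")
  case True
  then have all: "\<forall>t<length w. (\<lambda>x. a < x \<and> x \<le> b) (w ! t)"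
    using walk_side[OF assms(1,2,4,5,6,7)] by blast
  define c where "c = nx n (nx n b)"
  have "\<not> (a < c \<and> c \<le> b)" using nx2[OF assms(5,1)] assms(4,5,8,10) unfolding c_def by auto
  moreover have "c \<in> E n c" unfolding E_def by simp
  ultimately have "cw w (E n c) = 0" using cw_zero_outside[OF all] by blast
  then show ?thesis using assms(3,5,7) unfolding c_def by auto
next
  case False
  then have all: "\<forall>t<length w. (\<lambda>x. \<not> (a < x \<and> x \<le> b)) (w ! t)"
    using walk_side[OF assms(1,2,4,5,6,7)] by blast
  show ?thesis
  proof (rule ccontr)
    assume "b \<noteq> Suc a"
    then have ab: "Suc (Suc a) \<le> b" using assms(4) by simp
    define c where "c = nx n (nx n a)"
    have c: "c = Suc (Suc a)" using nx2[of a n] ab assms(1,4,5) unfolding c_def by auto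
    have "c \<in> E n c" unfolding E_def by simp
    then have "cw w (E n c) = 0" using cw_zero_outside[OF all, of c] c ab by auto
    then show False using assms(3)[rule_format, of a] assms(4,5,6) unfolding c_def by auto
  qed
qed

lemma zeros_le2:
  assumes "n \<ge> 3" "CW n w" "\<forall>j<n. cw w (E n j) \<noteq> cw w (E n (nx n (nx n j)))"
  shows "card {j. j < n \<and> cw w (E n j) = 0} \<le> 2"
proof (rule ccontr)
  let ?Z = "{j. j < n \<and> cw w (E n j) = 0}"
  have ord: False if "a < b" "b < c" "a \<in> ?Z" "b \<in> ?Z" "c \<in> ?Z" for a b c
  proof -
    have "b = Suc a" using pair_zero[OF assms, of a b c] that by auto
    moreover have "c = Suc b" using pair_zero[OF assms, of b c a] that by auto
    ultimately have "nx n (nx n a) = c" using nx2[of a n] that assms(1) by auto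
    moreover have "a < n" "c < n" using that by auto
    ultimately show False using assms(3)[rule_format, of a] that by auto
  qed
  assume "\<not> card ?Z \<le> 2"
  then obtain T where T: "T \<subseteq> ?Z" "card T = 3" using obtain_subset_with_card_n[of 3 ?Z] by auto
  then obtain x y z where xyz: "T = {x, y, z}" "x \<noteq> y" "y \<noteq> z" "x \<noteq> z" using card_3_iff[THEN iffD1, OF T(2)] by blast
  then have in3: "x \<in> ?Z" "y \<in> ?Z" "z \<in> ?Z" using T(1) by auto
  show False
  proof (cases "x < y")
    case True
    then show False
    proof (cases "y < z")
      case True show False by (rule ord[OF \<open>x < y\<close> True in3(1) in3(2) in3(3)])
    next
      case False then have "z < y" using xyz by simp
      show False
      proof (cases "x < z")
        case True show False by (rule ord[OF True \<open>z < y\<close> in3(1) in3(3) in3(2)])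
      next
        case False then have "z < x" using xyz(4) by simp
        show False by (rule ord[OF \<open>z < x\<close> \<open>x < y\<close> in3(3) in3(1) in3(2)])
      qed
    qed
  next
    case False then have "y < x" using xyz by simp
    then show False
    proof (cases "x < z")
      case True show False by (rule ord[OF \<open>y < x\<close> True in3(2) in3(1) in3(3)])
    next
      case False then have "z < x" using xyz by simp
      show False
      proof (cases "y < z")
        case True show False by (rule ord[OF True \<open>z < x\<close> in3(2) in3(3) in3(1)])
      next
        case False then have "z < y" using xyz(3) by simp
        show False by (rule ord[OF \<open>z < y\<close> \<open>y < x\<close> in3(3) in3(2) in3(1)])
      qed
    qed
  qed
qed


lemma card_ind: "card {j. j < (n::nat) \<and> P j} = (\<Sum>j<n. if P j then 1 else (0::nat))"
proof -
  have e: "{j. j < n \<and> P j} = {j \<in> {..<n}. P j}" by auto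
  show ?thesis unfolding e by (simp add: sum.inter_filter[symmetric])
qed

lemma nx_inj: "inj_on (nx n) {..<n}"
  by (rule inj_onI) (metis lessThan_iff pv_nx)

lemma nx_img: "nx n ` {..<n} = {..<n}"
proof
  show "nx n ` {..<n} \<subseteq> {..<n}" using nx_lt by auto
  show "{..<n} \<subseteq> nx n ` {..<n}"
  proof
    fix v assume "v \<in> {..<n}"
    then have "v = nx n (pv n v)" "pv n v \<in> {..<n}" using nx_pv pv_lt by auto
    then show "v \<in> nx n ` {..<n}" by blast
  qed
qed

lemma sum_nx: "(\<Sum>j<n. h (nx n j)) = (\<Sum>j<n. (h j :: nat))"
proof -
  have "(\<Sum>j\<in>nx n ` {..<n}. h j) = (\<Sum>j<n. h (nx n j))"
    using sum.reindex[OF nx_inj] by simp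
  then show ?thesis using nx_img by simp
qed

lemma T_eq:
  fixes x :: "nat \<Rightarrow> nat"
  shows "card {j. j < n \<and> odd (x j) \<and> even (x (nx n j))} = card {j. j < n \<and> even (x j) \<and> odd (x (nx n j))}"
proof -
  let ?a = "\<lambda>j. if odd (x j) \<and> odd (x (nx n j)) then 1 else (0::nat)"
  let ?b = "\<lambda>j. if odd (x j) \<and> even (x (nx n j)) then 1 else (0::nat)"
  let ?c = "\<lambda>j. if even (x j) \<and> odd (x (nx n j)) then 1 else (0::nat)"
  have "(\<Sum>j<n. if odd (x j) then 1 else (0::nat)) = (\<Sum>j<n. ?a j + ?b j)"
    by (rule sum.cong) auto
  moreover have "(\<Sum>j<n. if odd (x (nx n j)) then 1 else (0::nat)) = (\<Sum>j<n. ?a j + ?c j)"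
    by (rule sum.cong) auto
  moreover have "(\<Sum>j<n. if odd (x (nx n j)) then 1 else (0::nat)) = (\<Sum>j<n. if odd (x j) then 1 else (0::nat))"
    by (rule sum_nx)
  ultimately have "(\<Sum>j<n. ?b j) = (\<Sum>j<n. ?c j)" by (simp add: sum.distrib)
  then show ?thesis by (simp add: card_ind)
qed

lemma comb:
  fixes x :: "nat \<Rightarrow> nat"
  assumes H: "\<forall>j<n. x j \<noteq> x (nx n (nx n j))"
    and Z: "card {j. j < n \<and> x j = 0} \<le> 2"
    and O: "card {v. v < n \<and> odd (x (pv n v) + x v)} \<le> 2"
  shows "2 * n \<le> (\<Sum>j<n. x j) + 6"
proof -
  define T1 where "T1 = {j. j < n \<and> odd (x j) \<and> even (x (nx n j))}"
  define T1' where "T1' = {j. j < n \<and> even (x j) \<and> odd (x (nx n j))}"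
  define T2 where "T2 = {j. j < n \<and> odd (x (nx n j)) \<and> even (x (nx n (nx n j)))}"
  define U where "U = {j. j < n \<and> odd (x j) \<and> even (x (nx n (nx n j)))}"
  define A1 where "A1 = {j. j < n \<and> x j = 1}"
  define A1' where "A1' = {j. j < n \<and> x j = 1 \<and> x (nx n (nx n j)) \<ge> 3}"
  define A3 where "A3 = {j. j < n \<and> x j \<ge> 3}"
  define Ov where "Ov = {v. v < n \<and> odd (x (pv n v) + x v)}"
  have fin: "finite {j. j < n \<and> P j}" for P by simp
  have cT: "card T1 = card T1'" unfolding T1_def T1'_def by (rule T_eq)
  have "card (T1 \<union> T1') \<le> card Ov"
  proof (rule card_inj_on_le[of "nx n"])
    show "inj_on (nx n) (T1 \<union> T1')" using nx_inj by (rule inj_on_subset) (auto simp: T1_def T1'_def)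
    show "nx n ` (T1 \<union> T1') \<subseteq> Ov"
    proof
      fix v assume "v \<in> nx n ` (T1 \<union> T1')"
      then obtain j where j: "j \<in> T1 \<union> T1'" "v = nx n j" by blast
      then have "j < n" unfolding T1_def T1'_def by auto
      then have "v < n" "pv n v = j" using j nx_lt pv_nx by auto
      then show "v \<in> Ov" using j unfolding Ov_def T1_def T1'_def by auto
    qed
    show "finite Ov" unfolding Ov_def by simp
  qed
  moreover have "card (T1 \<union> T1') = card T1 + card T1'"
    by (rule card_Un_disjoint) (auto simp: T1_def T1'_def)
  ultimately have cT1: "card T1 \<le> 1" using O cT unfolding Ov_def by simp
  have "card T2 \<le> card T1"
  proof (rule card_inj_on_le[of "nx n"])
    show "inj_on (nx n) T2" using nx_inj by (rule inj_on_subset) (auto simp: T2_def)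
    show "nx n ` T2 \<subseteq> T1" unfolding T2_def T1_def using nx_lt by auto
    show "finite T1" unfolding T1_def by simp
  qed
  moreover have "U \<subseteq> T1 \<union> T2" unfolding U_def T1_def T2_def by auto
  then have "card U \<le> card (T1 \<union> T2)" by (rule card_mono[rotated]) (simp add: T1_def T2_def)
  moreover have "card (T1 \<union> T2) \<le> card T1 + card T2" by (rule card_Un_le)
  ultimately have cU: "card U \<le> 2" using cT1 by simp
  have "card A1' \<le> card A3"
  proof (rule card_inj_on_le[of "\<lambda>j. nx n (nx n j)"])
    show "inj_on (\<lambda>j. nx n (nx n j)) A1'"
    proof (rule inj_onI)
      fix i j assume "i \<in> A1'" "j \<in> A1'" "nx n (nx n i) = nx n (nx n j)"
      then show "i = j" unfolding A1'_def by (metis (mono_tags, lifting) mem_Collect_eq nx_lt pv_nx)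
    qed
    show "(\<lambda>j. nx n (nx n j)) ` A1' \<subseteq> A3" unfolding A1'_def A3_def using nx_lt by auto
    show "finite A3" unfolding A3_def by simp
  qed
  moreover have "A1 \<subseteq> A1' \<union> U"
  proof
    fix j assume j: "j \<in> A1"
    then have "x (nx n (nx n j)) \<noteq> 1" using H unfolding A1_def by auto
    then show "j \<in> A1' \<union> U" using j unfolding A1_def A1'_def U_def by auto presburger
  qed
  then have "card A1 \<le> card (A1' \<union> U)" by (rule card_mono[rotated]) (simp add: A1'_def U_def)
  moreover have "card (A1' \<union> U) \<le> card A1' + card U" by (rule card_Un_le)
  ultimately have cA1: "card A1 \<le> card A3 + 2" using cU by simp
  have key: "(\<Sum>j<n. min (x j) 3) + 2 * card {j. j < n \<and> x j = 0} + card A1 = 2 * n + card A3"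
  proof -
    have "(\<Sum>j<n. min (x j) 3) + 2 * card {j. j < n \<and> x j = 0} + card A1 =
       (\<Sum>j<n. min (x j) 3 + 2 * (if x j = 0 then 1 else 0) + (if x j = 1 then 1 else 0))"
      unfolding A1_def card_ind by (simp add: sum.distrib sum_distrib_left)
    also have "\<dots> = (\<Sum>j<n. 2 + (if x j \<ge> 3 then 1 else 0))"
      by (rule sum.cong) auto
    also have "\<dots> = 2 * n + card A3" unfolding A3_def card_ind by (subst sum.distrib) simp
    finally show ?thesis .
  qed
  have "(\<Sum>j<n. min (x j) 3) \<le> (\<Sum>j<n. x j)" by (rule sum_mono) simp
  then show ?thesis using key cA1 Z by linarith
qed


lemma cw_Nil: "cw [] e = 0" unfolding cw_def by simp
lemma cw_single: "cw [a] e = 0" unfolding cw_def by simp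

lemma cw_Cons2: "cw (a # b # r) e = (if {a, b} = e then 1 else 0) + cw (b # r) e"
proof -
  define f where "f t = (if {(a # b # r) ! t, (a # b # r) ! Suc t} = e then 1 else (0::nat))" for t
  have "cw (a # b # r) e = (\<Sum>t<Suc (length r). f t)" unfolding cw_sum f_def by simp
  also have "\<dots> = f 0 + (\<Sum>t<length r. f (Suc t))" by (rule sum.lessThan_Suc_shift)
  also have "(\<Sum>t<length r. f (Suc t)) = cw (b # r) e" unfolding cw_sum f_def by simp
  finally show ?thesis unfolding f_def by simp
qed

lemma cw_Cons: "cw (a # ys) e = cw ys e + (if ys \<noteq> [] \<and> {a, hd ys} = e then 1 else 0)"
  by (cases ys) (simp_all add: cw_single cw_Cons2 cw_Nil)

lemma cw_append: "cw (xs @ ys) e = cw xs e + cw ys e + (if xs \<noteq> [] \<and> ys \<noteq> [] \<and> {last xs, hd ys} = e then 1 else 0)"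
proof (induction xs)
  case Nil
  then show ?case by (simp add: cw_Nil)
next
  case (Cons a xs)
  show ?case
  proof (cases xs)
    case Nil
    then show ?thesis by (simp add: cw_Cons cw_single cw_Nil)
  next
    case (Cons b r)
    then have "cw ((a # xs) @ ys) e = (if {a, b} = e then 1 else 0) + cw (xs @ ys) e"
      by (simp add: cw_Cons2)
    moreover have "cw (a # xs) e = (if {a, b} = e then 1 else 0) + cw xs e"
      using Cons by (simp add: cw_Cons2)
    ultimately show ?thesis using Cons.IH Cons by simp
  qed
qed

lemma cw_rev: "cw (rev xs) e = cw xs e"
proof (induction xs)
  case Nil
  then show ?case by simp
next
  case (Cons a xs)
  have "cw (rev (a # xs)) e = cw (rev xs) e + (if xs \<noteq> [] \<and> {hd xs, a} = e then 1 else 0)"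
    by (simp add: cw_append cw_single last_rev)
  moreover have "{hd xs, a} = {a, hd xs}" by (rule insert_commute)
  ultimately show ?case using Cons.IH by (simp add: cw_Cons)
qed

lemma dbl: "{p, Suc p} = {j, Suc j} \<longleftrightarrow> p = (j::nat)"
  by (auto simp: doubleton_eq_iff)

lemma cw_upt: "cw [a..<b] {j, Suc j} = (if a \<le> j \<and> Suc j < b then 1 else 0)"
proof (induction b)
  case 0
  then show ?case by (simp add: cw_Nil)
next
  case (Suc b)
  show ?case
  proof (cases "a \<le> b")
    case True
    then have "[a..<Suc b] = [a..<b] @ [b]" by simp
    then have "cw [a..<Suc b] {j, Suc j} = cw [a..<b] {j, Suc j}
        + (if [a..<b] \<noteq> [] \<and> {last [a..<b], b} = {j, Suc j} then 1 else 0)"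
      by (simp add: cw_append cw_single)
    moreover have "a < b \<Longrightarrow> last [a..<b] = b - 1" by simp
    moreover have "a < b \<Longrightarrow> {b - 1, b} = {j, Suc j} \<longleftrightarrow> j = b - 1"
      using dbl[of "b - 1" j] by auto
    ultimately show ?thesis using Suc.IH True by auto
  next
    case False
    then show ?thesis by (simp add: cw_Nil)
  qed
qed


definition zz :: "nat \<Rightarrow> nat \<Rightarrow> nat \<Rightarrow> bool" where
  "zz s e j = (s \<le> j \<and> j < e \<and> 2 \<le> (j - s) mod 4)"

definition Y :: "nat \<Rightarrow> nat \<Rightarrow> nat \<Rightarrow> nat" where
  "Y s e j = (if j < s then 1 else 0) + (if zz s e j then 2 else 0) + 1 + (if e \<le> j then 1 else 0)"

lemma m4: "(2 \<le> (a::nat) mod 4) \<longleftrightarrow> \<not> (2 \<le> (a + 2) mod 4)" by presburger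
lemma m5: "2 * (Suc t div 4) + (if Suc t mod 4 = 3 then 1 else 0) =
        2 * (t div 4) + (if t mod 4 = 3 then 1 else 0) + (if 2 \<le> t mod 4 then 1 else (0::nat))"
  by presburger

lemma Y_pos: "Y s e j \<noteq> 0" unfolding Y_def by simp

lemma Y_ne: assumes "s \<le> 2" "e = s + 4 * k + 2" "m \<ge> e" "m \<le> e + 2" "Suc (Suc j) < m"
  shows "Y s e j \<noteq> Y s e (Suc (Suc j))"
proof -
  have ej: "\<not> e \<le> j" using assms by simp
  consider (a) "j < s" | (c) "s \<le> j" "Suc (Suc j) < e" | (d) "s \<le> j" "e \<le> Suc (Suc j)" by linarith
  then show ?thesis
  proof cases
    case a
    then have "Y s e j = 2" using ej unfolding Y_def zz_def by simp
    moreover have "Y s e (Suc (Suc j)) = 1" using a assms(1,2) unfolding Y_def zz_def by auto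
    ultimately show ?thesis by simp
  next
    case c
    have m: "(2 \<le> (j - s) mod 4) \<longleftrightarrow> \<not> (2 \<le> (Suc (Suc j) - s) mod 4)"
    proof -
      have "Suc (Suc j) - s = (j - s) + 2" using c(1) by simp
      then show ?thesis using m4[of "j - s"] by simp
    qed
    have "zz s e j \<longleftrightarrow> \<not> zz s e (Suc (Suc j))" using m c unfolding zz_def by auto
    moreover have "\<not> e \<le> Suc (Suc j)" using c by simp
    ultimately show ?thesis using ej c unfolding Y_def by auto
  next
    case d
    then have "Y s e (Suc (Suc j)) = 2" using assms(1,2) unfolding Y_def zz_def by auto
    moreover have "Y s e j \<noteq> 2" using ej d unfolding Y_def by auto
    ultimately show ?thesis by simp
  qed
qed

lemma sum_zz: assumes "e = s + 4 * k + 2" "e \<le> m"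
  shows "(\<Sum>j<m. if zz s e j then 1 else (0::nat)) = 2 * k"
proof -
  have A: "t \<le> 4 * k + 2 \<Longrightarrow> (\<Sum>j<s + t. if zz s e j then 1 else (0::nat)) = 2 * (t div 4) + (if t mod 4 = 3 then 1 else 0)" for t
  proof (induction t)
    case 0
    have "(\<Sum>j<s. if zz s e j then 1 else (0::nat)) = 0" by (rule sum.neutral) (auto simp: zz_def)
    then show ?case by simp
  next
    case (Suc t)
    have "zz s e (s + t) = (2 \<le> t mod 4)" using Suc.prems assms(1) unfolding zz_def by auto
    moreover have "2 * (Suc t div 4) + (if Suc t mod 4 = 3 then 1 else 0) =
        2 * (t div 4) + (if t mod 4 = 3 then 1 else 0) + (if 2 \<le> t mod 4 then 1 else (0::nat))"
      by (rule m5)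
    moreover have "(\<Sum>j<s + Suc t. if zz s e j then 1 else (0::nat)) =
        (\<Sum>j<s + t. if zz s e j then 1 else (0::nat)) + (if zz s e (s + t) then 1 else 0)" by simp
    ultimately show ?case using Suc by simp
  qed
  have B: "(\<Sum>j<e + t. if zz s e j then 1 else (0::nat)) = (\<Sum>j<e. if zz s e j then 1 else (0::nat))" for t
  proof (induction t)
    case (Suc t)
    have "\<not> zz s e (e + t)" unfolding zz_def by simp
    then show ?case using Suc by simp
  qed simp
  have a: "(\<Sum>j<s + (4 * k + 2). if zz s e j then 1 else (0::nat)) = 2 * ((4 * k + 2) div 4) + (if (4 * k + 2) mod 4 = 3 then 1 else 0)"
    by (rule A) simp
  have d: "(4 * k + 2) div 4 = k" "(4 * k + 2) mod 4 = (2::nat)"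
  proof -
    show "(4 * k + 2) div 4 = k" by simp
    have "(4 * k + 2) mod 4 = (2 + 4 * k) mod (4::nat)" by (simp only: add.commute)
    also have "\<dots> = 2 mod 4" by (rule mod_mult_self2)
    also have "\<dots> = 2" by simp
    finally show "(4 * k + 2) mod 4 = (2::nat)" .
  qed
  have se: "s + (4 * k + 2) = e" using assms(1) by simp
  have "(\<Sum>j<e. if zz s e j then 1 else (0::nat)) = 2 * k" using a unfolding se d by simp
  moreover have "m = e + (m - e)" using assms(2) by simp
  ultimately show ?thesis using B[of "m - e"] by simp
qed


definition pc :: "nat \<Rightarrow> nat \<Rightarrow> nat \<Rightarrow> nat list" where
  "pc s e j = (if zz s e j then [j, Suc j, j] else [j])"

definition PP :: "nat \<Rightarrow> nat \<Rightarrow> nat \<Rightarrow> nat list" where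
  "PP s e k = concat (map (pc s e) [0..<k])"

definition walkc :: "nat \<Rightarrow> nat \<Rightarrow> nat \<Rightarrow> nat list" where
  "walkc s e m = rev [1..<Suc s] @ PP s e m @ rev [e..<Suc m]"

lemma PP_0: "PP s e 0 = []" unfolding PP_def by simp
lemma PP_Suc: "PP s e (Suc k) = PP s e k @ pc s e k" unfolding PP_def by simp
lemma pc_ne: "pc s e k \<noteq> []" unfolding pc_def by simp
lemma pc_hd: "hd (pc s e k) = k" unfolding pc_def by simp
lemma pc_last: "last (pc s e k) = k" unfolding pc_def by simp

lemma PP_ne: "0 < k \<Longrightarrow> PP s e k \<noteq> []"
  by (cases k) (simp_all add: PP_Suc pc_ne)

lemma PP_last: "0 < k \<Longrightarrow> last (PP s e k) = k - 1"
  by (cases k) (simp_all add: PP_Suc pc_ne pc_last)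

lemma PP_hd: "0 < k \<Longrightarrow> hd (PP s e k) = 0"
proof (induction k)
  case (Suc k)
  show ?case
  proof (cases k)
    case 0 then show ?thesis by (simp add: PP_Suc PP_0 pc_hd)
  next
    case (Suc k')
    have eq: "PP s e (Suc k) = PP s e k @ pc s e k" by (rule PP_Suc)
    have ne: "PP s e k \<noteq> []" using PP_ne[of k s e] Suc by simp
    have "hd (PP s e (Suc k)) = hd (PP s e k)" unfolding eq using ne by (rule hd_append2)
    then show ?thesis using Suc.IH Suc by simp
  qed
qed simp

lemma cw_pc: "cw (pc s e k) {j, Suc j} = (if zz s e k \<and> j = k then 2 else 0)"
proof (cases "zz s e k")
  case True
  have "cw (pc s e k) {j, Suc j} = (if {k, Suc k} = {j, Suc j} then 1 else 0) + (if {Suc k, k} = {j, Suc j} then 1 else 0)"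
    using True unfolding pc_def by (simp add: cw_Cons2 cw_single)
  moreover have "{Suc k, k} = {k, Suc k}" by (rule insert_commute)
  ultimately show ?thesis using True dbl[of k j] by auto
next
  case False
  then show ?thesis unfolding pc_def by (simp add: cw_single)
qed

lemma cw_PP: "cw (PP s e k) {j, Suc j} = (if j < k \<and> zz s e j then 2 else 0) + (if Suc j < k then 1 else 0)"
proof (induction k)
  case 0
  then show ?case by (simp add: PP_0 cw_Nil)
next
  case (Suc k)
  have "cw (PP s e (Suc k)) {j, Suc j} = cw (PP s e k) {j, Suc j} + cw (pc s e k) {j, Suc j}
     + (if PP s e k \<noteq> [] \<and> {last (PP s e k), hd (pc s e k)} = {j, Suc j} then 1 else 0)"
    unfolding PP_Suc cw_append using pc_ne by simp
  moreover have "(if PP s e k \<noteq> [] \<and> {last (PP s e k), hd (pc s e k)} = {j, Suc j} then 1 else (0::nat))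
      = (if 0 < k \<and> j = k - 1 then 1 else 0)"
  proof (cases k)
    case 0 then show ?thesis by (simp add: PP_0)
  next
    case (Suc k')
    then show ?thesis using PP_ne[of k s e] PP_last[of k s e] pc_hd[of s e k] dbl[of k' j] by auto
  qed
  ultimately show ?case using Suc.IH cw_pc[of s e k j] by (cases "j = k") auto
qed

lemma len_PP: "length (PP s e k) = k + 2 * (\<Sum>j<k. if zz s e j then 1 else 0)"
  by (induction k) (auto simp: PP_0 PP_Suc pc_def)

lemma set_PP: "set (PP s e k) \<subseteq> {..k}"
  by (induction k) (auto simp: PP_0 PP_Suc pc_def)

definition adj :: "nat \<Rightarrow> nat \<Rightarrow> bool" where
  "adj a b = (b = Suc a \<or> a = Suc b)"

lemma adj_sym: "(\<lambda>x y. adj y x) = adj" unfolding adj_def by (auto simp: fun_eq_iff)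

lemma succ_upt: "successively adj [a..<b]"
proof (induction b)
  case (Suc b)
  then show ?case
    by (cases "a < b") (auto simp: successively_append_iff adj_def)
qed simp

lemma succ_rev_upt: "successively adj (rev [a..<b])"
  unfolding successively_rev adj_sym by (rule succ_upt)

lemma succ_PP: "successively adj (PP s e k)"
proof (induction k)
  case (Suc k)
  have sp: "successively adj (pc s e k)" unfolding pc_def by (simp add: adj_def)
  have j: "PP s e k = [] \<or> adj (last (PP s e k)) (hd (pc s e k))"
  proof (cases k)
    case (Suc k') then show ?thesis using PP_last[of k s e] pc_hd[of s e k] by (simp add: adj_def)
  qed (simp add: PP_0)
  show ?case unfolding PP_Suc successively_append_iff using Suc.IH sp j by blast
qed (simp add: PP_0)

lemma walkc_ne: "e \<le> m \<Longrightarrow> walkc s e m \<noteq> []" unfolding walkc_def by simp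

lemma set_walkc: "s \<le> m \<Longrightarrow> set (walkc s e m) \<subseteq> {..m}"
  unfolding walkc_def using set_PP[of s e m] by auto

lemma succ_walkc: assumes "0 < m" "e \<le> m" shows "successively adj (walkc s e m)"
proof -
  let ?A = "rev [1..<Suc s]" and ?P = "PP s e m" and ?C = "rev [e..<Suc m]"
  have r1: "?A = [] \<or> last ?A = 1"
  proof (cases "s = 0")
    case False
    then have "hd [1..<Suc s] = 1" by (simp del: upt_Suc)
    then show ?thesis by (simp add: last_rev del: upt_Suc)
  qed simp
  have r2: "hd ?C = m" using assms(2) by (simp add: hd_rev)
  have r3: "hd (?P @ ?C) = 0" using PP_hd[OF assms(1)] PP_ne[OF assms(1)] by simp
  have a1: "adj (last ?P) (hd ?C)" using PP_last[OF assms(1)] r2 assms(1) by (simp add: adj_def)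
  have a2: "adj 1 0" by (simp add: adj_def)
  have S1: "successively adj (?P @ ?C)"
    unfolding successively_append_iff using succ_PP[of s e m] succ_rev_upt[of e "Suc m"] a1 by blast
  have "?A = [] \<or> ?P @ ?C = [] \<or> adj (last ?A) (hd (?P @ ?C))" using r1 r3 a2 by auto
  then show ?thesis unfolding walkc_def successively_append_iff[of _ ?A]
    using S1 succ_rev_upt[of 1 "Suc s"] by blast
qed

lemma cw_walkc: assumes "0 < m" "e \<le> m" "j < m"
  shows "cw (walkc s e m) {j, Suc j} = Y s e j"
proof -
  let ?A = "rev [1..<Suc s]" and ?P = "PP s e m" and ?C = "rev [e..<Suc m]"
  have PC: "cw (?P @ ?C) {j, Suc j} = cw ?P {j, Suc j} + cw ?C {j, Suc j} + (if j = m - 1 then 1 else 0)"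
  proof -
    have "{last ?P, hd ?C} = {j, Suc j} \<longleftrightarrow> j = m - 1"
      using PP_last[OF assms(1)] assms dbl[of "m - 1" j] by (auto simp: hd_rev)
    then show ?thesis unfolding cw_append using PP_ne[OF assms(1)] assms(2) by simp
  qed
  have AJ: "(if ?A \<noteq> [] \<and> ?P @ ?C \<noteq> [] \<and> {last ?A, hd (?P @ ?C)} = {j, Suc j} then 1 else (0::nat))
      = (if 0 < s \<and> j = 0 then 1 else 0)"
  proof -
    have "hd (?P @ ?C) = 0" using PP_hd[OF assms(1)] PP_ne[OF assms(1)] by simp
    moreover have "0 < s \<Longrightarrow> last ?A = 1"
    proof -
      assume "0 < s"
      then have "hd [1..<Suc s] = 1" by (simp del: upt_Suc)
      then show "last ?A = 1" by (simp add: last_rev del: upt_Suc)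
    qed
    moreover have "{1, 0} = {0, 1::nat}" by (rule insert_commute)
    then have "{1, 0} = {j, Suc j} \<longleftrightarrow> j = 0" using dbl[of 0 j] by simp
    moreover have "?A = [] \<longleftrightarrow> s = 0" by simp
    moreover have "?P @ ?C \<noteq> []" using PP_ne[OF assms(1)] by simp
    ultimately show ?thesis by (cases "s = 0") simp_all
  qed
  have "cw (walkc s e m) {j, Suc j} = cw ?A {j, Suc j} + cw (?P @ ?C) {j, Suc j}
     + (if ?A \<noteq> [] \<and> ?P @ ?C \<noteq> [] \<and> {last ?A, hd (?P @ ?C)} = {j, Suc j} then 1 else 0)"
    unfolding walkc_def cw_append by simp
  also have "\<dots> = (if 1 \<le> j \<and> Suc j < Suc s then 1 else 0) + (cw ?P {j, Suc j} + (if e \<le> j \<and> Suc j < Suc m then 1 else 0) + (if j = m - 1 then 1 else 0))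
     + (if 0 < s \<and> j = 0 then 1 else 0)"
    unfolding AJ PC cw_rev cw_upt by simp
  also have "\<dots> = Y s e j"
    unfolding cw_PP Y_def using assms by auto
  finally show ?thesis .
qed


lemma card2: "card {a, b} \<le> 2" by (cases "a = b") simp_all

lemma lower4: assumes "n \<ge> 4" "irregularising (cycle_verts n) (cycle_edges n) w"
  shows "2 * n \<le> walk_length w + 6"
proof -
  have n3: "n \<ge> 3" using assms(1) by simp
  have CW: "CW n w" using assms(2) unfolding irregularising_def by blast
  have H: "\<forall>j<n. cw w (E n j) \<noteq> cw w (E n (nx n (nx n j)))" using irr_iff[OF n3 CW] assms(2) by blast
  have Z: "card {j. j < n \<and> cw w (E n j) = 0} \<le> 2" by (rule zeros_le2[OF n3 CW H])
  have sub: "{v. v < n \<and> odd (cw w (E n (pv n v)) + cw w (E n v))} \<subseteq> {w ! 0, w ! (length w - 1)}"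
  proof
    fix v assume v: "v \<in> {v. v < n \<and> odd (cw w (E n (pv n v)) + cw w (E n v))}"
    then have "v < n" by simp
    show "v \<in> {w ! 0, w ! (length w - 1)}"
    proof (rule ccontr)
      assume "v \<notin> {w ! 0, w ! (length w - 1)}"
      then have "w ! 0 \<noteq> v" "w ! (length w - 1) \<noteq> v" by auto
      then show False using parity[OF n3 CW \<open>v < n\<close>] v by simp
    qed
  qed
  have O: "card {v. v < n \<and> odd (cw w (E n (pv n v)) + cw w (E n v))} \<le> 2"
    using card_mono[OF _ sub] card2[of "w ! 0" "w ! (length w - 1)"] by simp
  have "2 * n \<le> (\<Sum>j<n. cw w (E n j)) + 6" by (rule comb[OF H Z O])
  then show ?thesis using len_sum[OF n3 CW] unfolding walk_length_def by simp
qed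

lemma lower3: assumes "irregularising (cycle_verts 3) (cycle_edges 3) w"
  shows "3 \<le> walk_length w"
proof -
  have n3: "(3::nat) \<ge> 3" by simp
  have CW: "CW 3 w" using assms unfolding irregularising_def by blast
  have H: "\<forall>j<3. cw w (E 3 j) \<noteq> cw w (E 3 (nx 3 (nx 3 j)))" using irr_iff[OF n3 CW] assms by blast
  have x: "nx 3 (nx 3 0) = 2" "nx 3 (nx 3 1) = 0" "nx 3 (nx 3 2) = 1" unfolding nx_def by simp_all
  have d1: "cw w (E 3 0) \<noteq> cw w (E 3 2)" using H[rule_format, of 0] x(1) by simp
  have d2: "cw w (E 3 1) \<noteq> cw w (E 3 0)" using H[rule_format, of 1] x(2) by simp
  have d3: "cw w (E 3 2) \<noteq> cw w (E 3 1)" using H[rule_format, of 2] x(3) by simp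
  note d = d1 d2 d3
  have s: "(\<Sum>j<3. cw w (E 3 j)) = cw w (E 3 0) + cw w (E 3 1) + cw w (E 3 2)"
    by (simp add: numeral_3_eq_3 numeral_2_eq_2)
  have "3 \<le> cw w (E 3 0) + cw w (E 3 1) + cw w (E 3 2)" using d by arith
  then show ?thesis using len_sum[OF n3 CW] s unfolding walk_length_def by simp
qed


lemma walk_E: assumes "n \<ge> 3" "a < m" "m < n" shows "{a, Suc a} = E n a"
  using assms unfolding E_def nx_def by auto

lemma upper4: assumes "n \<ge> 4"
  shows "\<exists>w. irregularising (cycle_verts n) (cycle_edges n) w \<and> walk_length w = 2 * n - 6"
proof -
  define m where "m = n - 2"
  define r where "r = (m - 2) mod 4"
  define s where "s = min r 2"
  define k where "k = (m - 2) div 4"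
  define e where "e = s + 4 * k + 2"
  have m2: "m \<ge> 2" "0 < m" "m < n" "Suc (Suc m) = n" using assms unfolding m_def by auto
  have r3: "r < 4" unfolding r_def by simp
  have mk: "m - 2 = 4 * k + r" unfolding k_def r_def by simp
  have em: "e \<le> m" "m \<le> e + 2" "s \<le> 2" "s \<le> m" using mk r3 m2 unfolding e_def s_def by auto
  define w where "w = walkc s e m"
  have n3: "n \<ge> 3" using assms by simp
  have setw: "set w \<subseteq> {..m}" unfolding w_def by (rule set_walkc[OF em(4)])
  have CW: "CW n w" unfolding is_walk_def
  proof (intro conjI allI impI)
    show "w \<noteq> []" unfolding w_def by (rule walkc_ne[OF em(1)])
    show "set w \<subseteq> cycle_verts n" using setw m2 unfolding cycle_verts_def by auto
    fix t assume t: "Suc t < length w"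
    have sw: "successively adj w" unfolding w_def by (rule succ_walkc[OF m2(2) em(1)])
    have a: "adj (w ! t) (w ! Suc t)" by (rule successively_nth[OF sw t])
    have b1: "w ! t \<in> set w" by (rule nth_mem) (use t in simp)
    have b2: "w ! Suc t \<in> set w" by (rule nth_mem[OF t])
    have b: "w ! t \<le> m" "w ! Suc t \<le> m" using setw b1 b2 by auto
    show "{w ! t, w ! Suc t} \<in> cycle_edges n"
    proof (cases "w ! Suc t = Suc (w ! t)")
      case True
      then have "{w ! t, w ! Suc t} = E n (w ! t)" using walk_E[OF n3, of "w ! t" m] b m2 by simp
      then show ?thesis using E_in[of "w ! t" n] b m2 by simp
    next
      case False
      then have "w ! t = Suc (w ! Suc t)" using a unfolding adj_def by simp
      then have "{w ! t, w ! Suc t} = E n (w ! Suc t)" using walk_E[OF n3, of "w ! Suc t" m] b m2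
        by (simp add: insert_commute)
      then show ?thesis using E_in[of "w ! Suc t" n] b m2 by simp
    qed
  qed
  have Xlow: "cw w (E n i) = Y s e i" if "i < m" for i
  proof -
    have "E n i = {i, Suc i}" using walk_E[OF n3 that m2(3)] by simp
    then show ?thesis unfolding w_def using cw_walkc[OF m2(2) em(1) that] by simp
  qed
  have Xhigh: "cw w (E n i) = 0" if "m \<le> i" "i < n" for i
  proof -
    have all: "\<forall>t<length w. (\<lambda>v. v \<le> m) (w ! t)" using setw nth_mem by fastforce
    have "Suc m \<in> E n i" using that m2 unfolding E_def nx_def by auto
    then show ?thesis using cw_zero_outside[OF all] by simp
  qed
  have H: "\<forall>j<n. cw w (E n j) \<noteq> cw w (E n (nx n (nx n j)))"
  proof (intro allI impI)
    fix j assume j: "j < n"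
    have nn: "nx n (nx n j) = (if Suc (Suc j) < n then Suc (Suc j) else Suc (Suc j) - n)"
      by (rule nx2[OF j n3])
    consider (a) "Suc (Suc j) < m" | (b) "j < m" "m \<le> Suc (Suc j)" | (c) "j = m" | (d) "j = Suc m"
      using j m2 by linarith
    then show "cw w (E n j) \<noteq> cw w (E n (nx n (nx n j)))"
    proof cases
      case a
      then have "nx n (nx n j) = Suc (Suc j)" using nn m2 by simp
      then show ?thesis using Xlow[of j] Xlow[of "Suc (Suc j)"] a Y_ne[of s e k m j] em unfolding e_def by simp
    next
      case b
      then have "nx n (nx n j) = Suc (Suc j)" using nn m2 by simp
      then show ?thesis using Xlow[of j] Xhigh[of "Suc (Suc j)"] b m2 Y_pos by simp
    next
      case c
      then have "nx n (nx n j) = 0" using nn m2 by simp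
      then show ?thesis using Xlow[of 0] Xhigh[of j] c m2 Y_pos by simp
    next
      case d
      then have "nx n (nx n j) = 1" using nn m2 by simp
      then show ?thesis using Xlow[of 1] Xhigh[of j] d m2 Y_pos by simp
    qed
  qed
  have irr: "irregularising (cycle_verts n) (cycle_edges n) w" using irr_iff[OF n3 CW] H by blast
  have l1: "length (rev [1..<Suc s]) = s" by simp
  have l2: "length (PP s e m) = m + 4 * k" using len_PP[of s e m] sum_zz[of e s k m] em(1) unfolding e_def by simp
  have l3: "length (rev [e..<Suc m]) = Suc m - e" using em(1) by simp
  have "length w = s + (m + 4 * k) + (Suc m - e)" unfolding w_def walkc_def length_append l1 l2 l3 by simp
  then have "walk_length w = 2 * n - 6" unfolding walk_length_def using em m2 unfolding e_def by linarith
  then show ?thesis using irr by blast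
qed

lemma upper3: "\<exists>w. irregularising (cycle_verts 3) (cycle_edges 3) w \<and> walk_length w = 3"
proof -
  define w :: "nat list" where "w = [1, 2, 0, 2]"
  have n3: "(3::nat) \<ge> 3" by simp
  have e: "E 3 0 = {0, 1}" "E 3 1 = {1, 2}" "E 3 2 = {2, 0}" unfolding E_def nx_def by (simp_all add: numeral_2_eq_2)
  have CW: "CW 3 w" unfolding is_walk_def
  proof (intro conjI allI impI)
    show "w \<noteq> []" unfolding w_def by simp
    show "set w \<subseteq> cycle_verts 3" unfolding w_def cycle_verts_def by auto
    fix t assume t: "Suc t < length w"
    then have "t = 0 \<or> t = 1 \<or> t = 2" unfolding w_def by auto
    moreover have "{w ! 0, w ! 1} = E 3 1" unfolding w_def e by (simp add: numeral_2_eq_2)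
    moreover have "{w ! 1, w ! 2} = E 3 2" unfolding w_def e by (simp add: numeral_2_eq_2)
    moreover have "{w ! 2, w ! 3} = E 3 2" unfolding w_def e by (auto simp: numeral_2_eq_2 numeral_3_eq_3)
    ultimately show "{w ! t, w ! Suc t} \<in> cycle_edges 3" using E_in[of 1 3] E_in[of 2 3]
      by (auto simp: numeral_2_eq_2 numeral_3_eq_3)
  qed
  have c: "cw w (E 3 0) = 0" "cw w (E 3 1) = 1" "cw w (E 3 2) = 2"
    unfolding w_def e by (simp_all add: cw_Cons2 cw_single doubleton_eq_iff)
  have x: "nx 3 (nx 3 0) = 2" "nx 3 (nx 3 1) = 0" "nx 3 (nx 3 2) = 1" unfolding nx_def by simp_all
  have H: "\<forall>j<3. cw w (E 3 j) \<noteq> cw w (E 3 (nx 3 (nx 3 j)))"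
  proof (intro allI impI)
    fix j :: nat assume "j < 3"
    then have "j = 0 \<or> j = 1 \<or> j = 2" by auto
    then show "cw w (E 3 j) \<noteq> cw w (E 3 (nx 3 (nx 3 j)))" using c x by auto
  qed
  have "irregularising (cycle_verts 3) (cycle_edges 3) w" using irr_iff[OF n3 CW] H by blast
  moreover have "walk_length w = 3" unfolding w_def walk_length_def by simp
  ultimately show ?thesis by blast
qed

theorem corollary5p6:
  fixes n :: nat
  assumes "n \<ge> 3"
  shows "MLW (cycle_verts n) (cycle_edges n) = (if n = 3 then 3 else 2 * n - 6)"
proof (cases "n = 3")
  case True
  have "MLW (cycle_verts n) (cycle_edges n) = 3"
    unfolding MLW_def True
  proof (rule Least_equality)
    show "\<exists>w. irregularising (cycle_verts 3) (cycle_edges 3) w \<and> walk_length w = 3" by (rule upper3)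
    fix p assume "\<exists>w. irregularising (cycle_verts 3) (cycle_edges 3) w \<and> walk_length w = p"
    then show "3 \<le> p" using lower3 by blast
  qed
  then show ?thesis using True by simp
next
  case False
  then have n4: "n \<ge> 4" using assms by simp
  have "MLW (cycle_verts n) (cycle_edges n) = 2 * n - 6"
    unfolding MLW_def
  proof (rule Least_equality)
    show "\<exists>w. irregularising (cycle_verts n) (cycle_edges n) w \<and> walk_length w = 2 * n - 6" by (rule upper4[OF n4])
    fix p assume "\<exists>w. irregularising (cycle_verts n) (cycle_edges n) w \<and> walk_length w = p"
    then obtain w where "irregularising (cycle_verts n) (cycle_edges n) w" "walk_length w = p" by blast
    then show "2 * n - 6 \<le> p" using lower4[OF n4] by fastforce
  qed
  then show ?thesis using False by simp
qed

end
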